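(* Let $M$ be an ordinal monoid with merge. For every $a\in M$ there exists an FO-approximant of $\pi$ from $a^{+}$ to $\mathrm{Cl}^{+}_{\sharp}(\{a\})$, where $a^{+}\subseteq M^{\mathrm{ord}}$ is the set of finite nonempty words all of whose letters are $a$.
   Context: Countable ordinal words over $\Sigma$: maps $w\colon\alpha\to\Sigma$, $\alpha$ a countable ordinal; $\Sigma^{\mathrm{ord}}$ their set. An ordinal monoid: set $M$ with $\pi\colon M^{\mathrm{ord}}\to M$, $\pi(x)=x$ on one-letter words, generalised associativity; $1=\pi(\varepsilon)$, $x\cdot y=\pi(xy)$, $x^\omega=\pi(xxx\cdots)$; ordered by $\le$ if $u\le v$ letterwise implies $\pi(u)\le\pi(v)$. $x^!$ idempotent power, $x^{!+k}$ eventual value of $x^{n!+k}$ in a finite semigroup. Ordinal monoid with merge: $(M,1,\le,\cdot,-^\omega,-^\sharp)$, $M$ finite, $(M,1,\le,\cdot,-^\omega)$ the presentation of an ordered finite ordinal monoid, $-^\sharp$ monotone with $a^{!+k}\le a^\sharp$, $(a^!)^\sharp=a^!$, $a^\sharp a^\sharp=(a^\sharp)^\sharp=a^\sharp$, $(ab)^\sharp=a(ba)^\sharp b$. $\mathrm{Cl}^{+}_{\sharp}(A)$ is the closure of $A$ under $\cdot$ and $-^\sharp$. FO logic over alphabet $M$ (atoms $x<y$, $a(x)$); FO-definable languages and maps (preimages FO-definable). For FO-definable $L\subseteq M^{\mathrm{ord}}$, an FO-approximant of $\pi$ over $L$ is an FO-definable $\rho\colon L\to M$ with $\pi(u)\le\rho(u)$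 for all $u\in L$; it is "from $L$ to $Y$" if its values lie in $Y\subseteq M$. *)

theory Defs
  imports Main "HOL-Library.Nat_Bijection"
begin

text \<open>A countable ordinal word over the alphabet 'm is represented by a well-order r on a
set of natural numbers (its set of positions Field r; every countable ordinal is the
order type of such a well-order) together with a labelling of positions. Labels outside
Field r are irrelevant. Words are identified up to isomorphism (see word_iso).\<close>

type_synonym 'm oword = "nat rel \<times> (nat \<Rightarrow> 'm)"

definition valid_word :: "'m oword \<Rightarrow> bool" where
  "valid_word u \<longleftrightarrow> Well_order (fst u)"

definition pos :: "'m oword \<Rightarrow> nat set" where
  "pos u = Field (fst u)"

definition word_iso :: "'m oword \<Rightarrow> 'm oword \<Rightarrow> bool" where
  "word_iso u v \<longleftrightarrow> (\<exists>f. bij_betw f (pos u) (pos v)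
      \<and> (\<forall>i\<in>pos u. \<forall>j\<in>pos u. (i, j) \<in> fst u \<longleftrightarrow> (f i, f j) \<in> fst v)
      \<and> (\<forall>i\<in>pos u. snd v (f i) = snd u i))"

definition empty_word :: "'m oword" where
  "empty_word = ({}, (\<lambda>_. undefined))"

definition letter_word :: "'m \<Rightarrow> 'm oword" where
  "letter_word x = ({(0, 0)}, (\<lambda>_. x))"

definition two_word :: "'m \<Rightarrow> 'm \<Rightarrow> 'm oword" where
  "two_word x y = ({(0, 0), (0, 1), (1, 1)}, (\<lambda>n. if n = 0 then x else y))"

definition omega_word :: "'m \<Rightarrow> 'm oword" where
  "omega_word x = ({(i, j). i \<le> j}, (\<lambda>_. x))"

text \<open>Concatenation (flattening) of an ordinal-indexed sequence of words:
positions are pairs (i, j) with i a position of the outer word and j a position of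
the i-th word, ordered lexicographically, encoded into nat via prod_encode.\<close>

definition flatten :: "nat rel \<Rightarrow> (nat \<Rightarrow> 'm oword) \<Rightarrow> 'm oword" where
  "flatten R W =
    ({(prod_encode (i, j), prod_encode (i', j')) | i j i' j'.
        i \<in> Field R \<and> i' \<in> Field R \<and> j \<in> pos (W i) \<and> j' \<in> pos (W i') \<and>
        (((i, i') \<in> R \<and> i \<noteq> i') \<or> (i = i' \<and> (j, j') \<in> fst (W i)))},
     (\<lambda>n. case prod_decode n of (i, j) \<Rightarrow> snd (W i) j))"

definition ordinal_monoid :: "('m oword \<Rightarrow> 'm) \<Rightarrow> bool" where
  "ordinal_monoid \<pi> \<longleftrightarrow>
     (\<forall>u v. valid_word u \<longrightarrow> valid_word v \<longrightarrow> word_iso u v \<longrightarrow> \<pi> u = \<pi> v) \<and>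
     (\<forall>u. valid_word u \<longrightarrow> (\<exists>n. pos u = {n}) \<longrightarrow> \<pi> u = snd u (THE n. pos u = {n})) \<and>
     (\<forall>R W. Well_order R \<longrightarrow> (\<forall>i\<in>Field R. valid_word (W i)) \<longrightarrow>
        \<pi> (flatten R W) = \<pi> (R, (\<lambda>i. \<pi> (W i))))"

definition ordered_ordinal_monoid :: "('m::order oword \<Rightarrow> 'm) \<Rightarrow> bool" where
  "ordered_ordinal_monoid \<pi> \<longleftrightarrow> ordinal_monoid \<pi> \<and>
     (\<forall>r w w'. Well_order r \<longrightarrow> (\<forall>i\<in>Field r. w i \<le> w' i) \<longrightarrow> \<pi> (r, w) \<le> \<pi> (r, w'))"

definition presentation_of ::
  "('m oword \<Rightarrow> 'm) \<Rightarrow> 'm \<Rightarrow> ('m \<Rightarrow> 'm \<Rightarrow> 'm) \<Rightarrow> ('m \<Rightarrow> 'm) \<Rightarrow> bool" where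
  "presentation_of \<pi> one mult omega \<longleftrightarrow>
     one = \<pi> empty_word \<and>
     (\<forall>x y. mult x y = \<pi> (two_word x y)) \<and>
     (\<forall>x. omega x = \<pi> (omega_word x))"

primrec mpow :: "'m \<Rightarrow> ('m \<Rightarrow> 'm \<Rightarrow> 'm) \<Rightarrow> 'm \<Rightarrow> nat \<Rightarrow> 'm" where
  "mpow one mult x 0 = one"
| "mpow one mult x (Suc n) = mult x (mpow one mult x n)"

text \<open>x^{!+k}: the eventual value of x^{n!+k}; x^! is x^{!+0}.\<close>

definition fact_pow :: "'m \<Rightarrow> ('m \<Rightarrow> 'm \<Rightarrow> 'm) \<Rightarrow> 'm \<Rightarrow> nat \<Rightarrow> 'm" where
  "fact_pow one mult x k = (THE y. \<exists>N. \<forall>n\<ge>N. mpow one mult x (fact n + k) = y)"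

definition ordinal_monoid_with_merge ::
  "('m::{finite,order} oword \<Rightarrow> 'm) \<Rightarrow> 'm \<Rightarrow> ('m \<Rightarrow> 'm \<Rightarrow> 'm) \<Rightarrow> ('m \<Rightarrow> 'm)
     \<Rightarrow> ('m \<Rightarrow> 'm) \<Rightarrow> bool" where
  "ordinal_monoid_with_merge \<pi> one mult omega sharp \<longleftrightarrow>
     ordered_ordinal_monoid \<pi> \<and> presentation_of \<pi> one mult omega \<and>
     mono sharp \<and>
     (\<forall>a k. fact_pow one mult a k \<le> sharp a) \<and>
     (\<forall>a. sharp (fact_pow one mult a 0) = fact_pow one mult a 0) \<and>
     (\<forall>a. mult (sharp a) (sharp a) = sharp a \<and> sharp (sharp a) = sharp a) \<and>
     (\<forall>a b. sharp (mult a b) = mult a (mult (sharp (mult b a)) b))"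

inductive_set cl_sharp :: "('m \<Rightarrow> 'm \<Rightarrow> 'm) \<Rightarrow> ('m \<Rightarrow> 'm) \<Rightarrow> 'm set \<Rightarrow> 'm set"
  for mult sharp A where
  base: "x \<in> A \<Longrightarrow> x \<in> cl_sharp mult sharp A"
| mult: "x \<in> cl_sharp mult sharp A \<Longrightarrow> y \<in> cl_sharp mult sharp A \<Longrightarrow>
           mult x y \<in> cl_sharp mult sharp A"
| sharp: "x \<in> cl_sharp mult sharp A \<Longrightarrow> sharp x \<in> cl_sharp mult sharp A"

datatype 'm fo =
    FLess nat nat
  | FLetter 'm nat
  | FNot "'m fo"
  | FAnd "'m fo" "'m fo"
  | FEx nat "'m fo"

primrec fv :: "'m fo \<Rightarrow> nat set" where
  "fv (FLess x y) = {x, y}"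
| "fv (FLetter a x) = {x}"
| "fv (FNot \<phi>) = fv \<phi>"
| "fv (FAnd \<phi> \<psi>) = fv \<phi> \<union> fv \<psi>"
| "fv (FEx x \<phi>) = fv \<phi> - {x}"

primrec sat :: "'m oword \<Rightarrow> (nat \<Rightarrow> nat) \<Rightarrow> 'm fo \<Rightarrow> bool" where
  "sat u \<sigma> (FLess x y) \<longleftrightarrow> (\<sigma> x, \<sigma> y) \<in> fst u \<and> \<sigma> x \<noteq> \<sigma> y"
| "sat u \<sigma> (FLetter a x) \<longleftrightarrow> snd u (\<sigma> x) = a"
| "sat u \<sigma> (FNot \<phi>) \<longleftrightarrow> \<not> sat u \<sigma> \<phi>"
| "sat u \<sigma> (FAnd \<phi> \<psi>) \<longleftrightarrow> sat u \<sigma> \<phi> \<and> sat u \<sigma> \<psi>"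
| "sat u \<sigma> (FEx x \<phi>) \<longleftrightarrow> (\<exists>p\<in>pos u. sat u (\<sigma>(x := p)) \<phi>)"

definition fo_definable :: "'m oword set \<Rightarrow> bool" where
  "fo_definable L \<longleftrightarrow> (\<exists>\<phi>. fv \<phi> = {} \<and>
     (\<forall>u. valid_word u \<longrightarrow> (u \<in> L \<longleftrightarrow> sat u (\<lambda>_. 0) \<phi>)))"

definition fo_definable_map :: "'m oword set \<Rightarrow> ('m oword \<Rightarrow> 'b) \<Rightarrow> bool" where
  "fo_definable_map L \<rho> \<longleftrightarrow> (\<forall>b. fo_definable {u \<in> L. \<rho> u = b})"

definition fo_approximant_to ::
  "('m::order oword \<Rightarrow> 'm) \<Rightarrow> 'm oword set \<Rightarrow> 'm set \<Rightarrow> ('m oword \<Rightarrow> 'm) \<Rightarrow> bool" where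
  "fo_approximant_to \<pi> L Y \<rho> \<longleftrightarrow> fo_definable L \<and> fo_definable_map L \<rho> \<and>
     (\<forall>u\<in>L. \<pi> u \<le> \<rho> u \<and> \<rho> u \<in> Y)"

definition plus_lang :: "'m \<Rightarrow> 'm oword set" where
  "plus_lang a = {u. valid_word u \<and> finite (pos u) \<and> pos u \<noteq> {} \<and> (\<forall>i\<in>pos u. snd u i = a)}"

end

theory Submission
  imports Defs
begin


lemma WO_facts:
  assumes "Well_order r"
  shows "refl_on (Field r) r" "trans r" "antisym r" "total_on (Field r) r" "wf (r - Id)"
  using assms by (auto simp: order_on_defs)

definition lt :: "nat rel \<Rightarrow> nat \<Rightarrow> nat \<Rightarrow> bool" where
  "lt r x y \<longleftrightarrow> (x, y) \<in> r \<and> x \<noteq> y"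

lemma lt_trans:
  assumes "Well_order r" "lt r x y" "lt r y z" shows "lt r x z"
  using assms WO_facts[OF assms(1)] unfolding lt_def trans_def antisym_def by blast

lemma lt_irrefl: "\<not> lt r x x" by (simp add: lt_def)

lemma lt_total:
  assumes "Well_order r" "x \<in> Field r" "y \<in> Field r" "x \<noteq> y"
  shows "lt r x y \<or> lt r y x"
  using assms WO_facts[OF assms(1)] unfolding lt_def total_on_def by blast

lemma lt_asym:
  assumes "Well_order r" "lt r x y" shows "\<not> lt r y x"
  using assms WO_facts[OF assms(1)] unfolding lt_def antisym_def by blast

lemma maxel:
  assumes wo: "Well_order r" and fin: "finite S" and ne: "S \<noteq> {}"
  shows "\<exists>z\<in>S. \<forall>w\<in>S. \<not> lt r z w"
proof -
  define f where "f z = card {v\<in>S. lt r v z}" for z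
  have "finite (f ` S)" "f ` S \<noteq> {}" using fin ne by auto
  then have "Max (f ` S) \<in> f ` S" by (rule Max_in)
  then obtain z where z: "z \<in> S" "f z = Max (f ` S)" by auto
  show ?thesis
  proof (intro bexI[OF _ z(1)] ballI notI)
    fix w assume w: "w \<in> S" "lt r z w"
    have "insert z {v\<in>S. lt r v z} \<subseteq> {v\<in>S. lt r v w}"
      using w z lt_trans[OF wo] by blast
    moreover have "z \<notin> {v\<in>S. lt r v z}" by (simp add: lt_irrefl)
    ultimately have "Suc (f z) \<le> f w"
      unfolding f_def using fin
      by (metis (no_types, lifting) card_insert_disjoint card_mono finite_subset mem_Collect_eq subsetI)
    moreover have "f w \<le> Max (f ` S)" using w fin by auto
    ultimately show False using z by simp
  qed
qed

definition below :: "nat rel \<Rightarrow> nat \<Rightarrow> nat set" where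
  "below r x = {z \<in> Field r. lt r z x}"

lemma below_insert_sub:
  assumes wo: "Well_order r" and p: "p \<in> below r x"
  shows "insert p (below r p) \<subseteq> below r x"
  using p lt_trans[OF wo] unfolding below_def by blast

lemma below_minus_sub:
  assumes wo: "Well_order r" and p: "p \<in> below r x" and mx: "\<forall>w\<in>below r x. \<not> lt r p w"
  shows "below r x - {p} \<subseteq> below r p"
  using p mx lt_total[OF wo] unfolding below_def by blast

fun Dk :: "nat \<Rightarrow> 'm fo" where
  "Dk 0 = FNot (FLess 0 0)"
| "Dk (Suc k) = FEx k (FAnd (FLess k (Suc k)) (Dk k))"

lemma fv_Dk: "fv (Dk k :: 'm fo) = {k}"
  by (induction k) auto

lemma sat_Dk:
  assumes wo: "Well_order (fst u)" and fin: "finite (Field (fst u))"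
  shows "\<sigma> k \<in> Field (fst u) \<Longrightarrow> sat u \<sigma> (Dk k) \<longleftrightarrow> k \<le> card (below (fst u) (\<sigma> k))"
proof (induction k arbitrary: \<sigma>)
  case 0
  then show ?case by simp
next
  case (Suc k)
  let ?r = "fst u" let ?x = "\<sigma> (Suc k)"
  have finb: "finite (below ?r y)" for y using fin unfolding below_def by auto
  have "sat u \<sigma> (Dk (Suc k)) \<longleftrightarrow> (\<exists>p\<in>Field ?r. lt ?r p ?x \<and> sat u (\<sigma>(k := p)) (Dk k))"
    by (simp add: pos_def lt_def)
  also have "\<dots> \<longleftrightarrow> (\<exists>p\<in>below ?r ?x. k \<le> card (below ?r p))"
    using Suc.IH unfolding below_def by auto
  also have "\<dots> \<longleftrightarrow> Suc k \<le> card (below ?r ?x)"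
  proof
    assume "\<exists>p\<in>below ?r ?x. k \<le> card (below ?r p)"
    then obtain p where p: "p \<in> below ?r ?x" "k \<le> card (below ?r p)" by blast
    have "card (insert p (below ?r p)) \<le> card (below ?r ?x)"
      by (rule card_mono[OF finb below_insert_sub[OF wo p(1)]])
    moreover have "p \<notin> below ?r p" by (simp add: below_def lt_irrefl)
    ultimately show "Suc k \<le> card (below ?r ?x)" using p(2) finb by simp
  next
    assume c: "Suc k \<le> card (below ?r ?x)"
    then have "below ?r ?x \<noteq> {}" by auto
    then obtain p where p: "p \<in> below ?r ?x" "\<forall>w\<in>below ?r ?x. \<not> lt ?r p w"
      using maxel[OF wo finb] by blast
    have "card (below ?r ?x - {p}) \<le> card (below ?r p)"
      by (rule card_mono[OF finb below_minus_sub[OF wo p]])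
    then have "k \<le> card (below ?r p)" using c p(1) finb by simp
    then show "\<exists>p\<in>below ?r ?x. k \<le> card (below ?r p)" using p(1) by blast
  qed
  finally show ?case .
qed

lemma sat_Ge:
  assumes wo: "Well_order (fst u)" and fin: "finite (Field (fst u))"
  shows "sat u \<sigma> (FEx j (Dk j)) \<longleftrightarrow> Suc j \<le> card (Field (fst u))"
proof -
  let ?r = "fst u"
  have finb: "finite (below ?r y)" for y using fin unfolding below_def by auto
  have "sat u \<sigma> (FEx j (Dk j)) \<longleftrightarrow> (\<exists>p\<in>Field ?r. j \<le> card (below ?r p))"
    using sat_Dk[OF wo fin] by (simp add: pos_def)
  also have "\<dots> \<longleftrightarrow> Suc j \<le> card (Field ?r)"
  proof
    assume "\<exists>p\<in>Field ?r. j \<le> card (below ?r p)"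
    then obtain p where p: "p \<in> Field ?r" "j \<le> card (below ?r p)" by blast
    have "insert p (below ?r p) \<subseteq> Field ?r" using p unfolding below_def by auto
    then have "card (insert p (below ?r p)) \<le> card (Field ?r)" by (rule card_mono[OF fin])
    moreover have "p \<notin> below ?r p" by (simp add: below_def lt_irrefl)
    ultimately show "Suc j \<le> card (Field ?r)" using p(2) finb by simp
  next
    assume c: "Suc j \<le> card (Field ?r)"
    then have "Field ?r \<noteq> {}" by auto
    then obtain p where p: "p \<in> Field ?r" "\<forall>w\<in>Field ?r. \<not> lt ?r p w"
      using maxel[OF wo fin] by blast
    have "Field ?r - {p} \<subseteq> below ?r p" using p lt_total[OF wo] unfolding below_def by blast
    then have "card (Field ?r - {p}) \<le> card (below ?r p)" by (rule card_mono[OF finb])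
    then have "j \<le> card (below ?r p)" using p(1) c fin by auto
    then show "\<exists>p\<in>Field ?r. j \<le> card (below ?r p)" using p(1) by blast
  qed
  finally show ?thesis .
qed

definition Lf :: "'m \<Rightarrow> 'm fo" where
  "Lf a = FAnd (FEx 0 (FNot (FEx 1 (FLess 0 1))))
     (FAnd (FNot (FEx 0 (FAnd (FEx 1 (FLess 1 0))
              (FNot (FEx 1 (FAnd (FLess 1 0) (FNot (FEx 2 (FAnd (FLess 1 2) (FLess 2 0))))))))))
           (FNot (FEx 0 (FNot (FLetter a 0)))))"

lemma fv_Lf: "fv (Lf a) = {}" by (auto simp: Lf_def)

lemma finite_from_pred:
  assumes wo: "Well_order r"
    and m: "m \<in> Field r" "\<forall>y\<in>Field r. \<not> lt r m y"
    and pr: "\<forall>y\<in>Field r. (\<exists>z\<in>Field r. lt r z y) \<longrightarrow>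
               (\<exists>z\<in>Field r. lt r z y \<and> \<not> (\<exists>w\<in>Field r. lt r z w \<and> lt r w y))"
  shows "finite (Field r)"
proof -
  have wf: "wf (r - Id)" using WO_facts[OF wo] by simp
  have "x \<in> Field r \<longrightarrow> finite (below r x)" for x
  proof (induction x rule: wf_induct_rule[OF wf])
    case (1 x)
    show ?case
    proof
      assume x: "x \<in> Field r"
      show "finite (below r x)"
      proof (cases "below r x = {}")
        case True then show ?thesis by simp
      next
        case False
        then obtain z where z: "z \<in> Field r" "lt r z x" "\<not> (\<exists>w\<in>Field r. lt r z w \<and> lt r w x)"
          using pr x unfolding below_def by blast
        have "below r x \<subseteq> insert z (below r z)"
          using z lt_total[OF wo] unfolding below_def by blast
        moreover have "finite (below r z)" using 1 z unfolding lt_def by auto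
        ultimately show ?thesis by (simp add: finite_subset)
      qed
    qed
  qed
  then have "finite (below r m)" using m by blast
  moreover have "Field r \<subseteq> insert m (below r m)"
    using m lt_total[OF wo] unfolding below_def by blast
  ultimately show ?thesis by (simp add: finite_subset)
qed

lemma sat_Lf:
  assumes v: "valid_word u"
  shows "sat u \<sigma> (Lf a) \<longleftrightarrow> u \<in> plus_lang a"
proof -
  let ?r = "fst u"
  have wo: "Well_order ?r" using v by (simp add: valid_word_def)
  let ?F = "Field ?r"
  have e1: "(\<exists>p\<in>?F. \<forall>pa\<in>?F. (p, pa) \<in> ?r \<longrightarrow> p = pa) \<longleftrightarrow> (\<exists>m\<in>?F. \<forall>y\<in>?F. \<not> lt ?r m y)"
    unfolding lt_def by blast
  have e2: "(\<forall>p\<in>?F. (\<forall>pa\<in>?F. (pa, p) \<in> ?r \<longrightarrow> pa = p) \<or>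
          (\<exists>pa\<in>?F. (pa, p) \<in> ?r \<and> pa \<noteq> p \<and>
              (\<forall>pb\<in>?F. (pa, pb) \<in> ?r \<longrightarrow> (pb, p) \<in> ?r \<longrightarrow> pa = pb \<or> pb = p)))
     \<longleftrightarrow> (\<forall>y\<in>?F. (\<exists>z\<in>?F. lt ?r z y) \<longrightarrow>
               (\<exists>z\<in>?F. lt ?r z y \<and> \<not> (\<exists>w\<in>?F. lt ?r z w \<and> lt ?r w y)))"
    unfolding lt_def by blast
  have e0: "sat u \<sigma> (Lf a) \<longleftrightarrow> (\<exists>p\<in>?F. \<forall>pa\<in>?F. (p, pa) \<in> ?r \<longrightarrow> p = pa) \<and>
      (\<forall>p\<in>?F. (\<forall>pa\<in>?F. (pa, p) \<in> ?r \<longrightarrow> pa = p) \<or>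
          (\<exists>pa\<in>?F. (pa, p) \<in> ?r \<and> pa \<noteq> p \<and>
              (\<forall>pb\<in>?F. (pa, pb) \<in> ?r \<longrightarrow> (pb, p) \<in> ?r \<longrightarrow> pa = pb \<or> pb = p))) \<and>
      (\<forall>p\<in>?F. snd u p = a)"
    by (simp add: Lf_def pos_def)
  have "sat u \<sigma> (Lf a) \<longleftrightarrow>
     (\<exists>m\<in>Field ?r. \<forall>y\<in>Field ?r. \<not> lt ?r m y) \<and>
     (\<forall>y\<in>Field ?r. (\<exists>z\<in>Field ?r. lt ?r z y) \<longrightarrow>
               (\<exists>z\<in>Field ?r. lt ?r z y \<and> \<not> (\<exists>w\<in>Field ?r. lt ?r z w \<and> lt ?r w y))) \<and>
     (\<forall>x\<in>Field ?r. snd u x = a)"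
    unfolding e0 e1 e2 ..
  also have "\<dots> \<longleftrightarrow> u \<in> plus_lang a"
  proof
    assume h: "(\<exists>m\<in>Field ?r. \<forall>y\<in>Field ?r. \<not> lt ?r m y) \<and>
     (\<forall>y\<in>Field ?r. (\<exists>z\<in>Field ?r. lt ?r z y) \<longrightarrow>
               (\<exists>z\<in>Field ?r. lt ?r z y \<and> \<not> (\<exists>w\<in>Field ?r. lt ?r z w \<and> lt ?r w y))) \<and>
     (\<forall>x\<in>Field ?r. snd u x = a)"
    then obtain m where m: "m \<in> Field ?r" "\<forall>y\<in>Field ?r. \<not> lt ?r m y" by blast
    have "finite (Field ?r)" using finite_from_pred[OF wo m] h by blast
    then show "u \<in> plus_lang a" using h m v by (auto simp: plus_lang_def pos_def)
  next
    assume u: "u \<in> plus_lang a"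
    then have fin: "finite (Field ?r)" and ne: "Field ?r \<noteq> {}" and al: "\<forall>x\<in>Field ?r. snd u x = a"
      by (auto simp: plus_lang_def pos_def)
    have 1: "\<exists>m\<in>Field ?r. \<forall>y\<in>Field ?r. \<not> lt ?r m y" using maxel[OF wo fin ne] .
    have 2: "(\<exists>z\<in>Field ?r. lt ?r z y \<and> \<not> (\<exists>w\<in>Field ?r. lt ?r z w \<and> lt ?r w y))"
      if "y \<in> Field ?r" "\<exists>z\<in>Field ?r. lt ?r z y" for y
    proof -
      have "finite (below ?r y)" "below ?r y \<noteq> {}" using fin that unfolding below_def by auto
      then obtain z where "z \<in> below ?r y" "\<forall>w\<in>below ?r y. \<not> lt ?r z w"
        using maxel[OF wo] by blast
      then show ?thesis unfolding below_def by auto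
    qed
    show "(\<exists>m\<in>Field ?r. \<forall>y\<in>Field ?r. \<not> lt ?r m y) \<and>
     (\<forall>y\<in>Field ?r. (\<exists>z\<in>Field ?r. lt ?r z y) \<longrightarrow>
               (\<exists>z\<in>Field ?r. lt ?r z y \<and> \<not> (\<exists>w\<in>Field ?r. lt ?r z w \<and> lt ?r w y))) \<and>
     (\<forall>x\<in>Field ?r. snd u x = a)" using 1 2 al by blast
  qed
  finally show ?thesis .
qed



definition R2 :: "nat rel" where "R2 = {(0,0),(0,1),(1,1)}"

lemma Field_R2: "Field R2 = {0,1}" by (auto simp: R2_def Field_def)

lemma WO_R2: "Well_order R2"
proof -
  have w: "wf (R2 - Id)"
  proof -
    have "R2 - Id = {(0::nat,1)}" by (auto simp: R2_def)
    moreover have "wf {(0::nat, 1::nat)}" by (rule wf_subset[OF wf_less]) auto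
    ultimately show ?thesis by simp
  qed
  show ?thesis using w unfolding order_on_defs Field_R2
    by (auto simp: R2_def refl_on_def trans_def antisym_def total_on_def Field_def)
qed

lemma fst_two: "fst (two_word x y) = R2" by (simp add: two_word_def R2_def)

lemma flatten_rel:
  "(prod_encode (i, j), prod_encode (i', j')) \<in> fst (flatten R W) \<longleftrightarrow>
     i \<in> Field R \<and> i' \<in> Field R \<and> j \<in> pos (W i) \<and> j' \<in> pos (W i') \<and>
        (((i, i') \<in> R \<and> i \<noteq> i') \<or> (i = i' \<and> (j, j') \<in> fst (W i)))"
  unfolding flatten_def by (auto dest: inj_onD[OF inj_prod_encode, simplified])

lemma flatten_lab: "snd (flatten R W) (prod_encode (i, j)) = snd (W i) j"
  by (simp add: flatten_def)

lemma pos_flatten: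
  assumes "\<forall>i\<in>Field R. valid_word (W i)"
  shows "pos (flatten R W) = {prod_encode (i, j) | i j. i \<in> Field R \<and> j \<in> pos (W i)}"
proof
  show "pos (flatten R W) \<subseteq> {prod_encode (i, j) | i j. i \<in> Field R \<and> j \<in> pos (W i)}"
  proof
    fix x assume "x \<in> pos (flatten R W)"
    then obtain y where "(x, y) \<in> fst (flatten R W) \<or> (y, x) \<in> fst (flatten R W)"
      unfolding pos_def Field_def by blast
    then show "x \<in> {prod_encode (i, j) | i j. i \<in> Field R \<and> j \<in> pos (W i)}"
      unfolding flatten_def by auto
  qed
next
  show "{prod_encode (i, j) | i j. i \<in> Field R \<and> j \<in> pos (W i)} \<subseteq> pos (flatten R W)"
  proof clarify
    fix i j assume ij: "i \<in> Field R" "j \<in> pos (W i)"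
    have "Well_order (fst (W i))" using assms ij by (simp add: valid_word_def)
    then have "(j, j) \<in> fst (W i)" using ij WO_facts(1) by (auto simp: pos_def refl_on_def)
    then have "(prod_encode (i, j), prod_encode (i, j)) \<in> fst (flatten R W)"
      using ij by (simp add: flatten_rel)
    then show "prod_encode (i, j) \<in> pos (flatten R W)" by (auto simp: pos_def Field_def)
  qed
qed

lemma valid_letter: "valid_word (letter_word x)"
  unfolding valid_word_def letter_word_def order_on_defs
  by (auto simp: Field_def refl_on_def trans_def antisym_def total_on_def)

lemma pos_letter: "pos (letter_word x) = {0}"
  by (auto simp: pos_def letter_word_def Field_def)

lemma valid_empty: "valid_word empty_word"
  unfolding valid_word_def empty_word_def order_on_defs
  by (auto simp: Field_def refl_on_def trans_def antisym_def total_on_def)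

lemma pos_empty: "pos empty_word = {}"
  by (auto simp: pos_def empty_word_def Field_def)



lemma iso_valid:
  assumes v: "valid_word u" and iso: "word_iso u v"
  shows "valid_word v"
proof -
  obtain f where f: "bij_betw f (pos u) (pos v)"
    "\<forall>i\<in>pos u. \<forall>j\<in>pos u. (i, j) \<in> fst u \<longleftrightarrow> (f i, f j) \<in> fst v"
    using iso unfolding word_iso_def by blast
  have eq: "fst v = dir_image (fst u) f"
  proof
    show "fst v \<subseteq> dir_image (fst u) f"
    proof clarify
      fix x y assume xy: "(x, y) \<in> fst v"
      then have "x \<in> pos v" "y \<in> pos v" by (auto simp: pos_def Field_def)
      then obtain i j where "i \<in> pos u" "j \<in> pos u" "x = f i" "y = f j"
        using f(1) unfolding bij_betw_def by blast
      then show "(x, y) \<in> dir_image (fst u) f" using xy f(2) unfolding dir_image_def by blast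
    qed
  next
    show "dir_image (fst u) f \<subseteq> fst v"
    proof clarify
      fix x y assume "(x, y) \<in> dir_image (fst u) f"
      then obtain i j where "(i, j) \<in> fst u" "x = f i" "y = f j" unfolding dir_image_def by blast
      moreover then have "i \<in> pos u" "j \<in> pos u" by (auto simp: pos_def Field_def)
      ultimately show "(x, y) \<in> fst v" using f(2) by blast
    qed
  qed
  have "inj_on f (Field (fst u))" using f(1) by (simp add: bij_betw_def pos_def)
  then show ?thesis using v eq Well_order_dir_image unfolding valid_word_def by metis
qed

primrec pw :: "('m \<Rightarrow> 'm \<Rightarrow> 'm) \<Rightarrow> 'm \<Rightarrow> nat \<Rightarrow> 'm" where
  "pw mult a 0 = a"
| "pw mult a (Suc n) = mult a (pw mult a n)"

locale OM =
  fixes \<pi> :: "'m oword \<Rightarrow> 'm" and one :: 'm and mult :: "'m \<Rightarrow> 'm \<Rightarrow> 'm" and omega :: "'m \<Rightarrow> 'm"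
  assumes om: "ordinal_monoid \<pi>" and pres: "presentation_of \<pi> one mult omega"
begin

lemma pi_iso: "valid_word u \<Longrightarrow> word_iso u v \<Longrightarrow> \<pi> u = \<pi> v"
  using om iso_valid unfolding ordinal_monoid_def by blast

lemma pi_single: assumes "valid_word u" "pos u = {n}" shows "\<pi> u = snd u n"
proof -
  have "\<forall>u. valid_word u \<longrightarrow> (\<exists>n. pos u = {n}) \<longrightarrow> \<pi> u = snd u (THE n. pos u = {n})"
    using om unfolding ordinal_monoid_def by blast
  then have "\<pi> u = snd u (THE n. pos u = {n})" using assms by blast
  moreover have "(THE n. pos u = {n}) = n" using assms(2) by auto
  ultimately show ?thesis by simp
qed

lemma pi_flatten: "Well_order R \<Longrightarrow> (\<forall>i\<in>Field R. valid_word (W i)) \<Longrightarrow>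
    \<pi> (flatten R W) = \<pi> (R, (\<lambda>i. \<pi> (W i)))"
  using om unfolding ordinal_monoid_def by blast

lemma pi_same:
  assumes "valid_word u" "fst u = fst v" "\<forall>i\<in>pos u. snd u i = snd v i"
  shows "\<pi> u = \<pi> v"
proof (rule pi_iso[OF assms(1)])
  show "word_iso u v" unfolding word_iso_def
    by (rule exI[of _ id]) (use assms in \<open>auto simp: pos_def\<close>)
qed

lemma pi_letter: "\<pi> (letter_word x) = x"
  using pi_single[OF valid_letter pos_letter] by (simp add: letter_word_def)

lemma pi_R2: "\<pi> (R2, f) = mult (f 0) (f 1)"
proof -
  have "mult (f 0) (f 1) = \<pi> (two_word (f 0) (f 1))" using pres by (simp add: presentation_of_def)
  also have "\<dots> = \<pi> (R2, f)"
  proof (rule pi_same)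
    show "valid_word (two_word (f 0) (f 1))" by (simp add: valid_word_def fst_two WO_R2)
    show "fst (two_word (f 0) (f 1)) = fst (R2, f)" by (simp add: fst_two)
    have "pos (two_word (f 0) (f 1)) = {0,1}" by (simp add: pos_def fst_two Field_R2)
    then show "\<forall>i\<in>pos (two_word (f 0) (f 1)). snd (two_word (f 0) (f 1)) i = snd (R2, f) i"
      by (auto simp: two_word_def)
  qed
  finally show ?thesis by simp
qed

lemma pi_flatten2:
  assumes "valid_word (W 0)" "valid_word (W 1)"
  shows "\<pi> (flatten R2 W) = mult (\<pi> (W 0)) (\<pi> (W 1))"
  using pi_flatten[OF WO_R2, of W] assms by (simp add: Field_R2 pi_R2)

lemma mult_one: "mult x one = x"
proof -
  define W where "W = (\<lambda>i::nat. if i = 0 then letter_word x else empty_word)"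
  have v: "\<forall>i\<in>Field R2. valid_word (W i)" by (simp add: W_def valid_letter valid_empty)
  have p: "pos (flatten R2 W) = {prod_encode (0, 0)}"
    unfolding pos_flatten[OF v] Field_R2 by (auto simp: W_def pos_letter pos_empty)
  have "\<pi> (letter_word x) = \<pi> (flatten R2 W)"
  proof (rule pi_iso[OF valid_letter])
    show "word_iso (letter_word x) (flatten R2 W)" unfolding word_iso_def
    proof (intro exI[of _ "\<lambda>_. prod_encode (0, 0)"] conjI ballI)
      show "bij_betw (\<lambda>_. prod_encode (0, 0)) (pos (letter_word x)) (pos (flatten R2 W))"
        by (simp add: p pos_letter bij_betw_def)
      fix i j assume "i \<in> pos (letter_word x)" "j \<in> pos (letter_word x)"
      then have "i = 0" "j = 0" by (auto simp: pos_letter)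
      then show "(i, j) \<in> fst (letter_word x) \<longleftrightarrow>
           (prod_encode (0, 0), prod_encode (0, 0)) \<in> fst (flatten R2 W)"
        by (simp add: pos_letter flatten_rel Field_R2 W_def)
    next
      fix i assume "i \<in> pos (letter_word x)"
      then show "snd (flatten R2 W) (prod_encode (0, 0)) = snd (letter_word x) i"
        by (simp add: flatten_lab W_def letter_word_def)
    qed
  qed
  also have "\<dots> = mult x one"
    using pi_flatten2[of W] pres by (simp add: W_def valid_letter valid_empty pi_letter
        presentation_of_def)
  finally show ?thesis using pi_letter by simp
qed


lemma pi_plus:
  "u \<in> plus_lang a \<Longrightarrow> card (pos u) = Suc n \<Longrightarrow> \<pi> u = pw mult a n"
proof (induction n arbitrary: u)
  case 0
  then obtain x where x: "pos u = {x}" by (auto simp: card_Suc_eq)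
  then show ?case using 0 pi_single[OF _ x] by (auto simp: plus_lang_def)
next
  case (Suc n)
  let ?r = "fst u" let ?F = "Field ?r"
  have vu: "valid_word u" and fin: "finite ?F" and al: "\<forall>i\<in>?F. snd u i = a"
    using Suc.prems by (auto simp: plus_lang_def pos_def)
  have wo: "Well_order ?r" using vu by (simp add: valid_word_def)
  have ne: "?F \<noteq> {}" using Suc.prems by (auto simp: pos_def)
  then obtain x0 where "x0 \<in> ?F" by blast
  obtain m where m: "m \<in> ?F" "\<And>y. (y, m) \<in> ?r - Id \<Longrightarrow> y \<notin> ?F"
    using wfE_min[OF WO_facts(5)[OF wo] \<open>x0 \<in> ?F\<close>] by blast
  have mle: "(m, y) \<in> ?r" if "y \<in> ?F" for y
  proof (cases "y = m")
    case True then show ?thesis using m(1) WO_facts(1)[OF wo] unfolding refl_on_def by blast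
  next
    case False
    then have "(m, y) \<in> ?r \<or> (y, m) \<in> ?r" using m(1) that WO_facts(4)[OF wo] unfolding total_on_def by blast
    then show ?thesis using m(2)[of y] that False by blast
  qed
  have lem: "(y, m) \<in> ?r \<longleftrightarrow> y = m" if "y \<in> ?F" for y
    using m(2)[of y] that mle[OF m(1)] by blast
  define v where "v = (Restr ?r (?F - {m}), snd u)"
  have posv: "pos v = ?F - {m}"
    unfolding v_def pos_def using Refl_Field_Restr2[of ?r "?F - {m}"] WO_facts(1)[OF wo] by auto
  have vv: "valid_word v" unfolding v_def valid_word_def using Well_order_Restr[OF wo] by simp
  have cv: "card (pos v) = Suc n" using posv fin Suc.prems(2) m(1) by (simp add: pos_def)
  have "pos v \<noteq> {}" using cv by auto
  moreover have "finite (pos v)" using posv fin by simp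
  moreover have "\<forall>i\<in>pos v. snd v i = a" using posv al by (simp add: v_def)
  ultimately have "v \<in> plus_lang a" using vv by (simp add: plus_lang_def)
  moreover note cv
  ultimately
  have piv: "\<pi> v = pw mult a n" using Suc.IH by blast
  define W where "W = (\<lambda>i::nat. if i = 0 then letter_word a else v)"
  have vW: "\<forall>i\<in>Field R2. valid_word (W i)" by (simp add: W_def valid_letter vv)
  have pf: "pos (flatten R2 W) = insert (prod_encode (0, 0)) ((\<lambda>j. prod_encode (1, j)) ` (?F - {m}))"
  proof -
    have "{prod_encode (i, j) |i j. i \<in> {0, 1} \<and> j \<in> pos (W i)} =
       {prod_encode (0, j) |j. j \<in> pos (W 0)} \<union> {prod_encode (1, j) |j. j \<in> pos (W 1)}"
      by blast
    also have "\<dots> = insert (prod_encode (0, 0)) ((\<lambda>j. prod_encode (1, j)) ` (?F - {m}))"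
      by (auto simp: W_def pos_letter posv)
    finally show ?thesis unfolding pos_flatten[OF vW] Field_R2 .
  qed
  define f where "f x = (if x = m then prod_encode (0, 0) else prod_encode (1, x))" for x
  have "\<pi> u = \<pi> (flatten R2 W)"
  proof (rule pi_iso[OF vu])
    show "word_iso u (flatten R2 W)" unfolding word_iso_def
    proof (intro exI[of _ f] conjI ballI)
      have "inj_on f ?F" unfolding inj_on_def f_def by simp
      moreover have "f ` ?F = insert (prod_encode (0, 0)) ((\<lambda>j. prod_encode (1, j)) ` (?F - {m}))"
      proof -
        have "?F = insert m (?F - {m})" using m(1) by blast
        then have "f ` ?F = insert (f m) (f ` (?F - {m}))" by (metis image_insert)
        moreover have "f ` (?F - {m}) = (\<lambda>j. prod_encode (1, j)) ` (?F - {m})"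
          by (rule image_cong) (auto simp: f_def)
        ultimately show ?thesis by (simp add: f_def)
      qed
      ultimately show "bij_betw f (pos u) (pos (flatten R2 W))"
        unfolding bij_betw_def pf by (simp add: pos_def[of u])
      fix i j assume ij: "i \<in> pos u" "j \<in> pos u"
      show "(i, j) \<in> fst u \<longleftrightarrow> (f i, f j) \<in> fst (flatten R2 W)"
      proof (cases "i = m")
        case True
        have Wl: "pos (W 0) = {0}" "fst (W 0) = {(0,0)}" "pos (W 1) = ?F - {m}"
          by (simp_all add: W_def pos_letter posv) (simp add: letter_word_def)
        show ?thesis
        proof (cases "j = m")
          case True
          then show ?thesis using \<open>i = m\<close> Wl mle[OF m(1)]
            by (simp add: f_def flatten_rel Field_R2)
        next
          case False
          then have "j \<in> ?F - {m}" using ij by (simp add: pos_def)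
          then show ?thesis using \<open>i = m\<close> False Wl mle[of j]
            by (simp add: f_def flatten_rel Field_R2 R2_def)
        qed
      next
        case False
        have Wl: "pos (W 0) = {0}" "pos (W 1) = ?F - {m}" "fst (W 1) = Restr ?r (?F - {m})"
          using posv by (simp_all add: W_def pos_letter) (simp add: v_def)
        have iF: "i \<in> ?F - {m}" using ij False by (simp add: pos_def)
        show ?thesis
        proof (cases "j = m")
          case True
          then show ?thesis using False Wl lem[of i] iF
            by (simp add: f_def flatten_rel Field_R2 R2_def)
        next
          case jm: False
          then have "j \<in> ?F - {m}" using ij by (simp add: pos_def)
          then show ?thesis using False jm Wl iF
            by (simp add: f_def flatten_rel Field_R2 R2_def)
        qed
      qed
    next
      fix i assume "i \<in> pos u"
      then show "snd (flatten R2 W) (f i) = snd u i"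
        using al by (auto simp: f_def flatten_lab W_def letter_word_def v_def pos_def)
    qed
  qed
  also have "\<dots> = mult a (pw mult a n)"
    using pi_flatten2[of W] by (simp add: W_def valid_letter vv pi_letter piv)
  finally show ?case by simp
qed

end

lemma mpow_ninj:
  fixes one :: "'m::finite"
  shows "\<not> inj (mpow one mult a)"
proof
  assume "inj (mpow one mult a)"
  moreover have "finite (range (mpow one mult a))" by (rule finite_subset[OF subset_UNIV finite_UNIV])
  ultimately have "finite (UNIV :: nat set)" by (rule finite_imageD[rotated])
  then show False by simp
qed

lemma mpow_period:
  fixes one :: "'m::finite"
  shows "\<exists>i P. 0 < P \<and> (\<forall>n\<ge>i. \<forall>c. mpow one mult a (n + c * P) = mpow one mult a n)"
proof -
  obtain i j where ij: "i < j" "mpow one mult a i = mpow one mult a j"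
  proof -
    obtain x y where "x \<noteq> y" "mpow one mult a x = mpow one mult a y"
      using mpow_ninj[of one mult a] unfolding inj_def by blast
    then show thesis using that by (metis linorder_neqE_nat)
  qed
  have sh: "mpow one mult a (i + t) = mpow one mult a (j + t)" for t
  proof (induction t)
    case 0 then show ?case using ij(2) by simp
  next
    case (Suc t) then show ?case by simp
  qed
  define P where "P = j - i"
  have P1: "mpow one mult a (n + P) = mpow one mult a n" if "n \<ge> i" for n
  proof -
    define t where "t = n - i"
    have t: "n = i + t" using that by (simp add: t_def)
    have "n + P = j + t" using t ij(1) unfolding P_def by linarith
    then have "mpow one mult a (n + P) = mpow one mult a (j + t)" by (rule arg_cong)
    also have "\<dots> = mpow one mult a (i + t)" using sh[of t] by (rule sym)
    finally show ?thesis using t by blast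
  qed
  have per: "mpow one mult a (n + c * P) = mpow one mult a n" if "n \<ge> i" for n c
  proof (induction c)
    case 0 then show ?case by simp
  next
    case (Suc c)
    have "n + Suc c * P = (n + c * P) + P" by simp
    moreover have "mpow one mult a ((n + c * P) + P) = mpow one mult a (n + c * P)"
      using P1 that by simp
    ultimately show ?case using Suc by (metis)
  qed
  have "0 < P" using ij(1) by (simp add: P_def)
  then show ?thesis using per by blast
qed
lemma fact_pow_eq:
  fixes one :: "'m::finite"
  assumes P: "0 < P" and per: "\<forall>n\<ge>i. \<forall>c. mpow one mult a (n + c * P) = mpow one mult a n"
    and k: "k \<ge> i"
  shows "fact_pow one mult a k = mpow one mult a k"
proof -
  let ?s = "mpow one mult a"
  have ev: "\<forall>m\<ge>P. ?s (fact m + k) = ?s k"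
  proof (intro allI impI)
    fix m assume "m \<ge> P"
    then have "P dvd fact m" using P by (simp add: dvd_fact)
    then obtain c where "fact m = P * c" by blast
    then have e: "fact m + k = k + c * P" by simp
    have "?s (k + c * P) = ?s k" using per k by blast
    then show "?s (fact m + k) = ?s k" by (simp only: e)
  qed
  show ?thesis unfolding fact_pow_def
  proof (rule the_equality)
    show "\<exists>N. \<forall>n\<ge>N. ?s (fact n + k) = ?s k" using ev by blast
  next
    fix y assume "\<exists>N. \<forall>n\<ge>N. ?s (fact n + k) = y"
    then obtain N where "\<forall>n\<ge>N. ?s (fact n + k) = y" by blast
    then have "?s (fact (max N P) + k) = y" by simp
    moreover have "?s (fact (max N P) + k) = ?s k" using ev by simp
    ultimately show "y = ?s k" by simp
  qed
qed

lemma (in OM) mpow_pw: "mpow one mult a (Suc n) = pw mult a n"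
  by (induction n) (simp_all add: mult_one)

lemma pw_cl: "pw mult a n \<in> cl_sharp mult sharp {a}"
  by (induction n) (auto intro: cl_sharp.intros)

definition FF :: "'m fo" where "FF = FEx 0 (FLess 0 0)"
definition FOr :: "'m fo \<Rightarrow> 'm fo \<Rightarrow> 'm fo" where "FOr p q = FNot (FAnd (FNot p) (FNot q))"
definition Disj :: "'m fo list \<Rightarrow> 'm fo" where "Disj xs = foldr FOr xs FF"

lemma fv_Disj: "\<forall>p\<in>set xs. fv p = {} \<Longrightarrow> fv (Disj xs) = {}"
  by (induction xs) (auto simp: Disj_def FOr_def FF_def)

lemma sat_Disj: "sat u \<sigma> (Disj xs) \<longleftrightarrow> (\<exists>p\<in>set xs. sat u \<sigma> p)"
  by (induction xs) (auto simp: Disj_def FOr_def FF_def)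

definition G :: "nat \<Rightarrow> 'm fo" where "G j = FEx j (Dk j)"

lemma fv_G: "fv (G j) = {}" by (simp add: G_def fv_Dk)

definition CE :: "nat \<Rightarrow> 'm fo" where "CE c = FAnd (G (c - 1)) (FNot (G c))"

lemma fv_CE: "fv (CE c) = {}" by (simp add: CE_def fv_G)

lemma sat_G_L:
  assumes "u \<in> plus_lang a" shows "sat u \<sigma> (G j) \<longleftrightarrow> Suc j \<le> card (pos u)"
  using assms sat_Ge[of u] by (auto simp: plus_lang_def valid_word_def pos_def G_def)

lemma sat_CE_L:
  assumes "u \<in> plus_lang a" "1 \<le> c" shows "sat u \<sigma> (CE c) \<longleftrightarrow> card (pos u) = c"
  using assms sat_G_L[OF assms(1)] by (auto simp: CE_def)

theorem lemma5p7:
  fixes \<pi> :: "('m::{finite,order}) oword \<Rightarrow> 'm"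
    and one :: 'm and mult :: "'m \<Rightarrow> 'm \<Rightarrow> 'm"
    and omega sharp :: "'m \<Rightarrow> 'm" and a :: 'm
  assumes "ordinal_monoid_with_merge \<pi> one mult omega sharp"
  shows "\<exists>\<rho>. fo_approximant_to \<pi> (plus_lang a) (cl_sharp mult sharp {a}) \<rho>"
proof -
  have om: "ordinal_monoid \<pi>" and pr: "presentation_of \<pi> one mult omega"
    and fp: "\<forall>a k. fact_pow one mult a k \<le> sharp a"
    using assms unfolding ordinal_monoid_with_merge_def ordered_ordinal_monoid_def by blast+
  interpret OM \<pi> one mult omega using om pr by (simp add: OM_def)
  obtain i P where P: "0 < P" "\<forall>n\<ge>i. \<forall>c. mpow one mult a (n + c * P) = mpow one mult a n"
    using mpow_period by blast
  define N where "N = max i 1"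
  define \<rho> where "\<rho> (u::'m oword) = (if card (pos u) < N then pw mult a (card (pos u) - 1) else sharp a)" for u
  let ?L = "plus_lang a"
  have card1: "1 \<le> card (pos u)" if "u \<in> ?L" for u
  proof -
    have "finite (pos u)" "pos u \<noteq> {}" using that by (simp_all add: plus_lang_def)
    then show ?thesis by (simp add: Suc_le_eq card_gt_0_iff)
  qed
  have piu: "\<pi> u = pw mult a (card (pos u) - 1)" if "u \<in> ?L" for u
  proof -
    have "card (pos u) = Suc (card (pos u) - 1)" using card1[OF that] by simp
    then show ?thesis using pi_plus[OF that] by blast
  qed
  have approx: "\<pi> u \<le> \<rho> u \<and> \<rho> u \<in> cl_sharp mult sharp {a}" if u: "u \<in> ?L" for u
  proof (cases "card (pos u) < N")
    case True
    then show ?thesis using piu[OF u] by (simp add: \<rho>_def pw_cl)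
  next
    case False
    let ?c = "card (pos u)"
    have "?c \<ge> i" "?c \<ge> 1" using False by (auto simp: N_def)
    then have "?c = Suc (?c - 1)" by simp
    then have "pw mult a (?c - 1) = mpow one mult a ?c" using mpow_pw[where a=a and n="?c - 1"] by simp
    also have "\<dots> = fact_pow one mult a ?c" using fact_pow_eq[OF P \<open>?c \<ge> i\<close>] by simp
    also have "\<dots> \<le> sharp a" using fp by blast
    finally show ?thesis using False piu[OF u]
      by (simp add: \<rho>_def cl_sharp.base cl_sharp.sharp)
  qed
  have defL: "fo_definable ?L"
    unfolding fo_definable_def
    by (rule exI[of _ "Lf a"]) (simp add: fv_Lf sat_Lf)
  have defmap: "fo_definable_map ?L \<rho>"
    unfolding fo_definable_map_def
  proof
    fix b
    define xs where "xs = (map CE (filter (\<lambda>c. pw mult a (c - 1) = b) [1..<N]) :: 'm fo list)"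
    define \<phi> where "\<phi> = FAnd (Lf a) (FOr (Disj xs) (if sharp a = b then G (N - 1) else FF))"
    have fv: "fv \<phi> = {}"
    proof -
      have "fv (Disj xs) = {}" by (rule fv_Disj) (simp add: xs_def fv_CE)
      moreover have "fv (FF :: 'm fo) = {}" by (simp add: FF_def)
      ultimately show ?thesis unfolding \<phi>_def FOr_def by (simp add: fv_Lf fv_G)
    qed
    have "u \<in> {u \<in> ?L. \<rho> u = b} \<longleftrightarrow> sat u (\<lambda>_. 0) \<phi>" if v: "valid_word u" for u
    proof (cases "u \<in> ?L")
      case False
      then show ?thesis using sat_Lf[OF v] by (simp add: \<phi>_def)
    next
      case True
      have sd: "sat u (\<lambda>_. 0) (Disj xs) \<longleftrightarrow>
          (card (pos u) < N \<and> pw mult a (card (pos u) - 1) = b)"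
      proof -
        have "sat u (\<lambda>_. 0) (Disj xs) \<longleftrightarrow> (\<exists>c\<in>set [1..<N]. pw mult a (c - 1) = b \<and> sat u (\<lambda>_. 0) (CE c))"
          unfolding sat_Disj xs_def by auto
        also have "\<dots> \<longleftrightarrow> (\<exists>c. 1 \<le> c \<and> c < N \<and> pw mult a (c - 1) = b \<and> card (pos u) = c)"
          using sat_CE_L[OF True] by auto
        also have "\<dots> \<longleftrightarrow> (card (pos u) < N \<and> pw mult a (card (pos u) - 1) = b)"
          using card1[OF True] by auto
        finally show ?thesis .
      qed
      have sg: "sat u (\<lambda>_. 0) (G (N - 1)) \<longleftrightarrow> N \<le> card (pos u)"
        using sat_G_L[OF True] by (simp add: N_def)
      have "u \<in> {u \<in> ?L. \<rho> u = b} \<longleftrightarrow> (card (pos u) < N \<and> pw mult a (card (pos u) - 1) = b) \<or>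
          (N \<le> card (pos u) \<and> sharp a = b)"
        using True by (auto simp: \<rho>_def)
      moreover have "sat u (\<lambda>_. 0) \<phi> \<longleftrightarrow> sat u (\<lambda>_. 0) (Disj xs) \<or>
          (sharp a = b \<and> sat u (\<lambda>_. 0) (G (N - 1)))"
        using True sat_Lf[OF v] by (simp add: \<phi>_def FOr_def FF_def)
      ultimately show ?thesis using sd sg by blast
    qed
    then show "fo_definable {u \<in> ?L. \<rho> u = b}"
      unfolding fo_definable_def using fv by blast
  qed
  show ?thesis
    unfolding fo_approximant_to_def using defL defmap approx by blast
qed


end
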